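(* For every odd positive integer $k$, there is a matroid in $\mathcal{D}$ that has a minor isomorphic to the binary projective geometry $PG(k-1,2)$. In particular, members of $\mathcal{D}$ can have arbitrarily large binary projective geometries as minors.
   Context: Relaxing a circuit-hyperplane $H$ of $M$ means forming the matroid on $E(M)$ whose bases are the bases of $M$ together with $H$. $\mathcal{D}$ is the collection of all matroids obtained from a connected binary matroid $M$ having two disjoint circuit-hyperplanes $X,Y$ with $X\cup Y=E(M)$ by relaxing both $X$ and $Y$ (the matroid on $E(M)$ whose bases are the bases of $M$ together with $X$ and $Y$). $PG(k-1,2)$ is the rank-$k$ binary projective geometry, i.e. the vector matroid of all $2^k-1$ nonzero vectors of $\mathrm{GF}(2)^k$. *)

theory Defs
  imports Main "HOL-Library.Z2"
begin

type_synonym 'a matroid = "'a set \<times> 'a set set"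

definition ground :: "'a matroid \<Rightarrow> 'a set" where "ground M = fst M"
definition bases :: "'a matroid \<Rightarrow> 'a set set" where "bases M = snd M"

definition matroid :: "'a matroid \<Rightarrow> bool" where
  "matroid M \<longleftrightarrow> finite (ground M) \<and> bases M \<noteq> {} \<and>
     (\<forall>B\<in>bases M. B \<subseteq> ground M) \<and>
     (\<forall>B1\<in>bases M. \<forall>B2\<in>bases M. \<forall>x\<in>B1 - B2.
        \<exists>y\<in>B2 - B1. insert y (B1 - {x}) \<in> bases M)"

definition indep :: "'a matroid \<Rightarrow> 'a set \<Rightarrow> bool" where
  "indep M I \<longleftrightarrow> (\<exists>B\<in>bases M. I \<subseteq> B)"

definition rank :: "'a matroid \<Rightarrow> 'a set \<Rightarrow> nat" where
  "rank M X = Max {card I | I. I \<subseteq> X \<and> indep M I}"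

definition circuit :: "'a matroid \<Rightarrow> 'a set \<Rightarrow> bool" where
  "circuit M C \<longleftrightarrow> C \<subseteq> ground M \<and> \<not> indep M C \<and> (\<forall>C'. C' \<subset> C \<longrightarrow> indep M C')"

definition flat :: "'a matroid \<Rightarrow> 'a set \<Rightarrow> bool" where
  "flat M F \<longleftrightarrow> F \<subseteq> ground M \<and> (\<forall>x\<in>ground M - F. rank M (insert x F) > rank M F)"

definition hyperplane :: "'a matroid \<Rightarrow> 'a set \<Rightarrow> bool" where
  "hyperplane M H \<longleftrightarrow> flat M H \<and> rank M H + 1 = rank M (ground M)"

definition circuit_hyperplane :: "'a matroid \<Rightarrow> 'a set \<Rightarrow> bool" where
  "circuit_hyperplane M X \<longleftrightarrow> circuit M X \<and> hyperplane M X"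

definition connected_matroid :: "'a matroid \<Rightarrow> bool" where
  "connected_matroid M \<longleftrightarrow>
     (\<forall>x\<in>ground M. \<forall>y\<in>ground M. x \<noteq> y \<longrightarrow> (\<exists>C. circuit M C \<and> x \<in> C \<and> y \<in> C))"

definition gf2_lin_indep :: "('a \<Rightarrow> nat \<Rightarrow> bit) \<Rightarrow> 'a set \<Rightarrow> bool" where
  "gf2_lin_indep f I \<longleftrightarrow>
     (\<forall>c :: 'a \<Rightarrow> bit. (\<forall>i. (\<Sum>x\<in>I. c x * f x i) = 0) \<longrightarrow> (\<forall>x\<in>I. c x = 0))"

definition binary :: "'a matroid \<Rightarrow> bool" where
  "binary M \<longleftrightarrow> (\<exists>f :: 'a \<Rightarrow> nat \<Rightarrow> bit.
     \<forall>I. I \<subseteq> ground M \<longrightarrow> (indep M I \<longleftrightarrow> gf2_lin_indep f I))"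

definition maximal_sets :: "'a set set \<Rightarrow> 'a set set" where
  "maximal_sets S = {I \<in> S. \<forall>J\<in>S. I \<subseteq> J \<longrightarrow> J = I}"

text \<open>Binary projective geometry PG(k-1,2): the vector matroid of all nonzero vectors of GF(2)^k
  (vectors in GF(2)^nat with support in {0..<k}).\<close>
definition PG :: "nat \<Rightarrow> (nat \<Rightarrow> bit) matroid" where
  "PG k = (let E = {v :: nat \<Rightarrow> bit. (\<forall>i\<ge>k. v i = 0) \<and> v \<noteq> (\<lambda>_. 0)}
           in (E, maximal_sets {I. I \<subseteq> E \<and> gf2_lin_indep id I}))"

text \<open>Minors M/C\D: for C, D disjoint subsets of E and J a basis of M|C, the independent
  sets of M/C\D are the subsets I of E - C - D with I \<union> J independent in M.\<close>
definition is_minor :: "'a matroid \<Rightarrow> 'a matroid \<Rightarrow> bool" where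
  "is_minor N M \<longleftrightarrow> (\<exists>C D J. C \<subseteq> ground M \<and> D \<subseteq> ground M \<and> C \<inter> D = {} \<and>
     J \<in> maximal_sets {I. I \<subseteq> C \<and> indep M I} \<and>
     N = (ground M - C - D, maximal_sets {I. I \<subseteq> ground M - C - D \<and> indep M (I \<union> J)}))"

definition iso :: "'a matroid \<Rightarrow> 'b matroid \<Rightarrow> bool" where
  "iso M N \<longleftrightarrow> (\<exists>\<phi>. bij_betw \<phi> (ground M) (ground N) \<and>
     (\<forall>X. X \<subseteq> ground M \<longrightarrow> (X \<in> bases M \<longleftrightarrow> \<phi> ` X \<in> bases N)))"

text \<open>The class D: relax two disjoint complementary circuit-hyperplanes X, Y of a
  connected binary matroid.\<close>
definition class_D :: "'a matroid set" where
  "class_D = {(ground M, bases M \<union> {X, Y}) | M X Y.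
     matroid M \<and> binary M \<and> connected_matroid M \<and>
     circuit_hyperplane M X \<and> circuit_hyperplane M Y \<and>
     X \<inter> Y = {} \<and> X \<union> Y = ground M}"

end

theory Submission imports Defs "HOL-Library.Function_Algebras" "HOL.Vector_Spaces" begin

type_synonym vec = "nat \<Rightarrow> bit"

definition gscale :: "bit \<Rightarrow> vec \<Rightarrow> vec" where "gscale c v = (\<lambda>i. c * v i)"

interpretation G: vector_space gscale
  by unfold_locales (auto simp: gscale_def fun_eq_iff algebra_simps)

lemma sum_vec_apply: "(\<Sum>x\<in>A. (g x :: vec)) i = (\<Sum>x\<in>A. g x i)"
  by (induction A rule: infinite_finite_induct) auto

lemma lin_indep_iff: "finite S \<Longrightarrow> gf2_lin_indep id S \<longleftrightarrow> G.independent S"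
  unfolding gf2_lin_indep_def G.dependent_finite
  by (auto simp: fun_eq_iff sum_vec_apply gscale_def)

lemma gf2_reindex:
  assumes "inj_on f I"
  shows "gf2_lin_indep f I \<longleftrightarrow> gf2_lin_indep id (f ` I)"
proof
  assume H: "gf2_lin_indep f I"
  show "gf2_lin_indep id (f ` I)"
    unfolding gf2_lin_indep_def
  proof (intro allI impI ballI)
    fix c :: "vec \<Rightarrow> bit" and v assume S: "\<forall>i. (\<Sum>x\<in>f ` I. c x * id x i) = 0" and v: "v \<in> f ` I"
    have "\<forall>i. (\<Sum>x\<in>I. (c \<circ> f) x * f x i) = 0"
      using S by (simp add: sum.reindex[OF assms])
    with H have "\<forall>x\<in>I. (c \<circ> f) x = 0" unfolding gf2_lin_indep_def by blast
    with v show "c v = 0" by auto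
  qed
next
  assume H: "gf2_lin_indep id (f ` I)"
  show "gf2_lin_indep f I"
    unfolding gf2_lin_indep_def
  proof (intro allI impI ballI)
    fix c :: "_ \<Rightarrow> bit" and x assume S: "\<forall>i. (\<Sum>x\<in>I. c x * f x i) = 0" and x: "x \<in> I"
    let ?c = "c \<circ> inv_into I f"
    have "\<forall>i. (\<Sum>v\<in>f ` I. ?c v * id v i) = 0"
      using S assms by (simp add: sum.reindex)
    with H have "\<forall>v\<in>f ` I. ?c v = 0" unfolding gf2_lin_indep_def by blast
    with x assms show "c x = 0" by auto
  qed
qed

definition vm :: "'a set \<Rightarrow> ('a \<Rightarrow> vec) \<Rightarrow> 'a matroid" where
  "vm E f = (E, maximal_sets {I. I \<subseteq> E \<and> gf2_lin_indep f I})"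

lemma gf2_iff_indep:
  assumes "finite E" "inj_on f E" "I \<subseteq> E"
  shows "gf2_lin_indep f I \<longleftrightarrow> G.independent (f ` I)"
  using assms gf2_reindex[of f I] lin_indep_iff[of "f ` I"]
  by (metis finite_imageI finite_subset inj_on_subset)

lemma exists_maximal:
  assumes "finite E" "I \<in> F" "\<forall>J\<in>F. J \<subseteq> E"
  shows "\<exists>B\<in>maximal_sets F. I \<subseteq> B"
proof -
  have "F \<subseteq> Pow E" using assms(3) by auto
  then have fin: "finite F" using assms(1) by (simp add: finite_subset)
  obtain B where "B \<in> F" "I \<subseteq> B" "\<forall>b\<in>F. B \<subseteq> b \<longrightarrow> B = b"
    using finite_has_maximal2[OF fin assms(2)] by blast
  then show ?thesis unfolding maximal_sets_def by auto
qed

lemma vm_fam: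
  assumes "finite E" "inj_on f E"
  shows "{I. I \<subseteq> E \<and> gf2_lin_indep f I} = {I. I \<subseteq> E \<and> G.independent (f ` I)}"
  using gf2_iff_indep[OF assms] by blast

lemma bases_vm:
  assumes "finite E" "inj_on f E"
  shows "bases (vm E f) = maximal_sets {I. I \<subseteq> E \<and> G.independent (f ` I)}"
  unfolding vm_def bases_def using vm_fam[OF assms] by simp

lemma ground_vm: "ground (vm E f) = E" unfolding vm_def ground_def by simp

lemma indep_vm:
  assumes "finite E" "inj_on f E"
  shows "indep (vm E f) I \<longleftrightarrow> I \<subseteq> E \<and> G.independent (f ` I)"
proof
  assume "indep (vm E f) I"
  then obtain B where B: "B \<in> maximal_sets {I. I \<subseteq> E \<and> G.independent (f ` I)}" "I \<subseteq> B"
    unfolding indep_def bases_vm[OF assms] by (rule bexE)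
  have "B \<subseteq> E" "G.independent (f ` B)" using B(1) unfolding maximal_sets_def by auto
  then show "I \<subseteq> E \<and> G.independent (f ` I)"
    using B(2) G.independent_mono[of "f ` B" "f ` I"] by (simp add: image_mono subset_trans[of I B E])
next
  assume H: "I \<subseteq> E \<and> G.independent (f ` I)"
  have "\<exists>B\<in>maximal_sets {I. I \<subseteq> E \<and> G.independent (f ` I)}. I \<subseteq> B"
    by (rule exists_maximal[OF assms(1)]) (use H in auto)
  then show "indep (vm E f) I"
    unfolding indep_def bases_vm[OF assms] .
qed

lemma span_max:
  assumes "inj_on f E" and B: "B \<in> maximal_sets {I. I \<subseteq> E \<and> G.independent (f ` I)}" and z: "z \<in> E"
  shows "f z \<in> G.span (f ` B)"
proof (cases "z \<in> B")
  case True then show ?thesis by (simp add: G.span_base)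
next
  case False
  have BE: "B \<subseteq> E" and iB: "G.independent (f ` B)"
    and mx: "\<And>J. J \<subseteq> E \<Longrightarrow> G.independent (f ` J) \<Longrightarrow> B \<subseteq> J \<Longrightarrow> J = B"
    using B unfolding maximal_sets_def by auto
  have "insert z B \<noteq> B" using False by blast
  then have "\<not> G.independent (f ` insert z B)"
    using mx[of "insert z B"] BE z by blast
  moreover have "f z \<notin> f ` B"
  proof
    assume "f z \<in> f ` B"
    then obtain b where "b \<in> B" "f z = f b" by blast
    then show False using assms(1) BE z False unfolding inj_on_def by blast
  qed
  ultimately show ?thesis using iB G.independent_insert[of "f z" "f ` B"] by simp
qed

lemma inj_notin_image:
  assumes "inj_on f E" "S \<subseteq> E" "z \<in> E" "z \<notin> S"
  shows "f z \<notin> f ` S"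
proof
  assume "f z \<in> f ` S"
  then obtain b where "b \<in> S" "f z = f b" by blast
  then show False using assms unfolding inj_on_def by blast
qed

lemma matroid_vm:
  assumes fin: "finite E" and inj: "inj_on f E"
  shows "matroid (vm E f)"
proof -
  let ?F = "{I. I \<subseteq> E \<and> G.independent (f ` I)}"
  have "\<exists>B\<in>maximal_sets ?F. {} \<subseteq> B"
    by (rule exists_maximal[OF fin]) (auto simp: G.independent_empty)
  then have ne: "bases (vm E f) \<noteq> {}"
    unfolding bases_vm[OF assms] by blast
  have sub: "\<forall>B\<in>bases (vm E f). B \<subseteq> ground (vm E f)"
    unfolding bases_vm[OF assms] ground_vm maximal_sets_def by blast
  have exch: "\<exists>y\<in>B2 - B1. insert y (B1 - {x}) \<in> maximal_sets ?F"
    if B1: "B1 \<in> maximal_sets ?F" and B2: "B2 \<in> maximal_sets ?F" and x: "x \<in> B1 - B2" for B1 B2 x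
  proof -
    let ?S = "B1 - {x}"
    have B1E: "B1 \<subseteq> E" and iB1: "G.independent (f ` B1)" using B1 unfolding maximal_sets_def by auto
    have B2E: "B2 \<subseteq> E" using B2 unfolding maximal_sets_def by auto
    have xE: "x \<in> E" using x B1E by auto
    have fB1: "f ` B1 = insert (f x) (f ` ?S)" using x by auto
    have fxS: "f x \<notin> f ` ?S" by (rule inj_notin_image[OF inj _ xE]) (use B1E in auto)
    have iS: "G.independent (f ` ?S)" using iB1 G.independent_mono[of "f ` B1" "f ` ?S"] by auto
    have nspan: "f x \<notin> G.span (f ` ?S)" using iB1 fB1 fxS G.independent_insert[of "f x" "f ` ?S"] by simp
    have "\<exists>y\<in>B2. f y \<notin> G.span (f ` ?S)"
    proof (rule ccontr)
      assume "\<not> ?thesis"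
      then have "f ` B2 \<subseteq> G.span (f ` ?S)" by auto
      then have "G.span (f ` B2) \<subseteq> G.span (f ` ?S)"
        using G.span_minimal[of "f ` B2" "G.span (f ` ?S)"] G.subspace_span by blast
      moreover have "f x \<in> G.span (f ` B2)" using span_max[OF inj B2 xE] .
      ultimately show False using nspan by blast
    qed
    then obtain y where y: "y \<in> B2" "f y \<notin> G.span (f ` ?S)" by blast
    have yS: "y \<notin> ?S" using y G.span_base[of "f y" "f ` ?S"] by blast
    have yx: "y \<noteq> x" using x y by auto
    have yB1: "y \<in> B2 - B1" using yS yx y by auto
    have yE: "y \<in> E" using y B2E by auto
    let ?T = "insert (f y) (f ` ?S)"
    have fT: "f ` insert y ?S = ?T" by simp
    have iT: "G.independent ?T" using G.independent_insertI[OF y(2) iS] .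
    have "f y \<in> G.span (f ` B1)" using span_max[OF inj B1 yE] .
    then have "f x \<in> G.span ?T" using G.in_span_insert[of "f y" "f x" "f ` ?S"] fB1 y(2) by simp
    then have "f ` B1 \<subseteq> G.span ?T" using fB1 G.span_base[of _ ?T] by auto
    then have spB1: "G.span (f ` B1) \<subseteq> G.span ?T"
      using G.span_minimal[of "f ` B1" "G.span ?T"] G.subspace_span by blast
    have iyS: "insert y ?S \<subseteq> E" using yE B1E by auto
    have mx: "J = insert y ?S" if J: "J \<subseteq> E" "G.independent (f ` J)" "insert y ?S \<subseteq> J" for J
    proof (rule ccontr)
      assume "J \<noteq> insert y ?S"
      then obtain z where z: "z \<in> J" "z \<notin> insert y ?S" using J(3) by blast
      have zE: "z \<in> E" using z J by auto
      have "f z \<in> G.span ?T" using span_max[OF inj B1 zE] spB1 by blast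
      moreover have "f z \<notin> ?T" using inj_notin_image[OF inj iyS zE z(2)] fT by simp
      moreover have "insert (f z) ?T \<subseteq> f ` J" using J(3) z(1) by auto
      then have "G.independent (insert (f z) ?T)"
        using J(2) G.independent_mono[of "f ` J" "insert (f z) ?T"] by blast
      ultimately show False using G.independent_insert[of "f z" ?T] by simp
    qed
    have "insert y ?S \<in> maximal_sets ?F"
      unfolding maximal_sets_def using iyS fT iT mx by auto
    then show ?thesis using yB1 by blast
  qed
  show ?thesis
    unfolding matroid_def
  proof (intro conjI)
    show "finite (ground (vm E f))" using fin by (simp add: ground_vm)
    show "bases (vm E f) \<noteq> {}" by (rule ne)
    show "\<forall>B\<in>bases (vm E f). B \<subseteq> ground (vm E f)" by (rule sub)
    show "\<forall>B1\<in>bases (vm E f). \<forall>B2\<in>bases (vm E f). \<forall>x\<in>B1 - B2.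
        \<exists>y\<in>B2 - B1. insert y (B1 - {x}) \<in> bases (vm E f)"
      unfolding bases_vm[OF assms] using exch by blast
  qed
qed

lemma binary_vm:
  assumes "finite E" "inj_on f E"
  shows "binary (vm E f)"
  unfolding binary_def ground_vm
  using indep_vm[OF assms] gf2_iff_indep[OF assms] by blast

declare add_bit_eq_xor[simp del] mult_bit_eq_and[simp del]

lemma bit_add_self[simp]: "(x::bit) + x = 0"
  by (cases x) simp_all

lemma bit_of_nat: "(of_nat n :: bit) = (if even n then 0 else 1)"
  by (induction n) auto

lemma gscale1[simp]: "gscale 1 v = v" and gscale0[simp]: "gscale 0 v = 0"
  by (auto simp: gscale_def fun_eq_iff)

lemma vsum_self[simp]: "(v::vec) + v = 0"
  by (simp add: fun_eq_iff)

lemma sumzero_circuit: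
  assumes fin: "finite T" and sz: "(\<Sum>v\<in>T. v) = (0::vec)" and a: "a \<in> T"
    and ia: "G.independent (T - {a})"
  shows "G.dependent T" "\<And>S. S \<subset> T \<Longrightarrow> G.independent S"
proof -
  show "G.dependent T"
    unfolding G.dependent_finite[OF fin]
    by (rule exI[of _ "\<lambda>_. 1"]) (use a sz in auto)
next
  fix S assume ST: "S \<subset> T"
  show "G.independent S"
  proof (rule ccontr)
    assume "\<not> G.independent S"
    have finS: "finite S" using fin ST finite_subset[of S T] by blast
    obtain u v0 where v0: "v0 \<in> S" "u v0 \<noteq> 0" and su: "(\<Sum>v\<in>S. gscale (u v) v) = 0"
      using G.dependent_finite[OF finS] \<open>\<not> G.independent S\<close> by blast
    define u' where "u' v = (if v \<in> S then u v else 0)" for v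
    have "(\<Sum>v\<in>T. gscale (u' v) v) = (\<Sum>v\<in>S. gscale (u' v) v)"
      by (rule sum.mono_neutral_right[OF fin]) (use ST in \<open>auto simp: u'_def\<close>)
    also have "\<dots> = 0" using su by (simp add: u'_def)
    finally have sT: "(\<Sum>v\<in>T. gscale (u' v) v) = 0" .
    have finTa: "finite (T - {a})" using fin by simp
    have splitT: "(\<Sum>v\<in>T. g v) = g a + (\<Sum>v\<in>T - {a}. g v)" for g :: "vec \<Rightarrow> vec"
      using sum.remove[OF fin a] by simp
    show False
    proof (cases "u' a = 0")
      case True
      have "(\<Sum>v\<in>T - {a}. gscale (u' v) v) = 0" using sT splitT[of "\<lambda>v. gscale (u' v) v"] True by simp
      moreover have "v0 \<in> T - {a}" "u' v0 \<noteq> 0" using v0 ST True by (auto simp: u'_def)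
      ultimately have "G.dependent (T - {a})"
        unfolding G.dependent_finite[OF finTa] by blast
      then show False using ia by simp
    next
      case False
      define u'' where "u'' v = u' v + 1" for v
      have "(\<Sum>v\<in>T. gscale (u'' v) v) = (\<Sum>v\<in>T. gscale (u' v) v) + (\<Sum>v\<in>T. v)"
        by (simp add: u''_def G.scale_left_distrib sum.distrib)
      then have sT2: "(\<Sum>v\<in>T. gscale (u'' v) v) = 0" using sT sz by simp
      have "u'' a = 0" using False by (simp add: u''_def)
      then have "(\<Sum>v\<in>T - {a}. gscale (u'' v) v) = 0" using sT2 splitT[of "\<lambda>v. gscale (u'' v) v"] by simp
      moreover obtain w where w: "w \<in> T" "w \<notin> S" using ST by blast
      moreover have "a \<in> S" using False by (auto simp: u'_def split: if_splits)
      moreover have "u'' w = 1" using w by (simp add: u''_def u'_def)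
      moreover have "w \<in> T - {a}" using w \<open>a \<in> S\<close> by blast
      ultimately have "G.dependent (T - {a})"
        unfolding G.dependent_finite[OF finTa] by (intro exI[of _ u'']) auto
      then show False using ia by simp
    qed
  qed
qed

definition sig :: "nat set \<Rightarrow> vec \<Rightarrow> bit" where "sig J v = (\<Sum>i\<in>J. v i)"

lemma sig_add: "sig J (v + w) = sig J v + sig J w"
  by (simp add: sig_def sum.distrib)

lemma sig_sum: "sig J (\<Sum>v\<in>S. g v) = (\<Sum>v\<in>S. sig J (g v))"
  by (simp add: sig_def sum_vec_apply sum.swap[of _ J])

lemma subspace_sig: "G.subspace {v. sig J v = 0}"
  unfolding G.subspace_def
  by (auto simp: sig_def sum.distrib gscale_def sum_distrib_left[symmetric])

lemma notin_span_sig: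
  assumes "\<forall>v\<in>S. sig J v = 0" "sig J y = 1"
  shows "y \<notin> G.span S"
proof -
  have "G.span S \<subseteq> {v. sig J v = 0}"
    using G.span_minimal[OF _ subspace_sig] assms(1) by blast
  then show ?thesis using assms(2) by auto
qed

lemma indep_insert_sig:
  assumes "G.independent S" "\<forall>v\<in>S. sig J v = 0" "sig J y = 1"
  shows "G.independent (insert y S)"
  using G.independent_insertI[OF notin_span_sig[OF assms(2,3)] assms(1)] .

definition unitv :: "nat \<Rightarrow> vec" where "unitv j = (\<lambda>i. if i = j then 1 else 0)"

definition supp_below :: "nat \<Rightarrow> vec \<Rightarrow> bool" where "supp_below R v \<longleftrightarrow> (\<forall>i\<ge>R. v i = 0)"

lemma in_span_units:
  assumes "supp_below R v"
  shows "v \<in> G.span (unitv ` {..<R})"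
proof -
  have "v = (\<Sum>i<R. gscale (v i) (unitv i))"
  proof
    fix j
    show "v j = (\<Sum>i<R. gscale (v i) (unitv i)) j"
    proof (cases "j < R")
      case True
      have "(\<Sum>i<R. gscale (v i) (unitv i)) j = (\<Sum>i<R. if j = i then v i else 0)"
        unfolding sum_vec_apply by (rule sum.cong) (auto simp: gscale_def unitv_def)
      then show ?thesis using True by simp
    next
      case False
      then show ?thesis using assms by (simp add: sum_vec_apply gscale_def unitv_def supp_below_def)
    qed
  qed
  also have "\<dots> \<in> G.span (unitv ` {..<R})"
    by (intro G.span_sum G.span_scale G.span_base) auto
  finally show ?thesis .
qed

lemma card_bound:
  assumes "G.independent S" "\<forall>v\<in>S. supp_below R v"
  shows "finite S \<and> card S \<le> R"
proof -
  have "finite S \<and> card S \<le> card (unitv ` {..<R})"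
    by (rule G.independent_span_bound) (use assms in_span_units in auto)
  moreover have "card (unitv ` {..<R}) \<le> R" using card_image_le[of "{..<R}" unitv] by simp
  ultimately show ?thesis by linarith
qed

lemma indep_sum_nonzero:
  assumes "G.independent S" "T \<subseteq> S" "T \<noteq> {}" "finite T"
  shows "(\<Sum>v\<in>T. v) \<noteq> (0::vec)"
proof
  assume "(\<Sum>v\<in>T. v) = 0"
  then have "G.dependent T" unfolding G.dependent_finite[OF assms(4)]
    using assms(3) by (intro exI[of _ "\<lambda>_. 1"]) auto
  then show False using assms G.independent_mono by blast
qed

lemma rank_eq:
  assumes "finite X" "I0 \<subseteq> X" "indep M I0" "card I0 = n"
    "\<And>I. I \<subseteq> X \<Longrightarrow> indep M I \<Longrightarrow> card I \<le> n"
  shows "rank M X = n"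
proof -
  have fin: "finite {card I | I. I \<subseteq> X \<and> indep M I}"
  proof (rule finite_subset)
    show "{card I | I. I \<subseteq> X \<and> indep M I} \<subseteq> card ` Pow X" by auto
    show "finite (card ` Pow X)" using assms(1) by simp
  qed
  show ?thesis unfolding rank_def
    by (rule Max_eqI[OF fin]) (use assms in auto)
qed

lemma rank_ge:
  assumes "finite X" "I \<subseteq> X" "indep M I"
  shows "card I \<le> rank M X"
proof -
  have fin: "finite {card I | I. I \<subseteq> X \<and> indep M I}"
  proof (rule finite_subset)
    show "{card I | I. I \<subseteq> X \<and> indep M I} \<subseteq> card ` Pow X" by auto
    show "finite (card ` Pow X)" using assms(1) by simp
  qed
  show ?thesis unfolding rank_def
    by (rule Max_ge[OF fin]) (use assms in auto)
qed

lemma rank_le: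
  assumes "finite X" "I0 \<subseteq> X" "indep M I0"
    "\<And>I. I \<subseteq> X \<Longrightarrow> indep M I \<Longrightarrow> card I \<le> n"
  shows "rank M X \<le> n"
proof -
  have fin: "finite {card I | I. I \<subseteq> X \<and> indep M I}"
  proof (rule finite_subset)
    show "{card I | I. I \<subseteq> X \<and> indep M I} \<subseteq> card ` Pow X" by auto
    show "finite (card ` Pow X)" using assms(1) by simp
  qed
  show ?thesis unfolding rank_def
    by (rule Max.boundedI[OF fin]) (use assms in auto)
qed

lemma inj_image_psubset:
  assumes "inj_on f E" "C \<subseteq> E" "C' \<subset> C"
  shows "f ` C' \<subset> f ` C"
proof -
  have "f ` C' \<subseteq> f ` C" using assms(3) by auto
  moreover have "C' \<subseteq> E" using assms(2,3) by blast
  then have "f ` C' = f ` C \<longleftrightarrow> C' = C" by (rule inj_on_image_eq_iff[OF assms(1) _ assms(2)])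
  then have "f ` C' \<noteq> f ` C" using assms(3) by blast
  ultimately show ?thesis by blast
qed

lemma circ_of_vec:
  assumes fin: "finite E" and inj: "inj_on f E" and CE: "C \<subseteq> E"
    and dep: "G.dependent (f ` C)" and pr: "\<And>S. S \<subset> f ` C \<Longrightarrow> G.independent S"
  shows "circuit (vm E f) C"
  unfolding circuit_def ground_vm
proof (intro conjI allI impI)
  show "C \<subseteq> E" by (rule CE)
  show "\<not> indep (vm E f) C" using indep_vm[OF fin inj, of C] dep by blast
  fix C' assume "C' \<subset> C"
  then have "f ` C' \<subset> f ` C" by (rule inj_image_psubset[OF inj CE])
  then have "G.independent (f ` C')" by (rule pr)
  moreover have "C' \<subseteq> E" using CE \<open>C' \<subset> C\<close> by blast
  ultimately show "indep (vm E f) C'" using indep_vm[OF fin inj, of C'] by blast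
qed

lemma circuit_hyperplane_gen:
  assumes fin: "finite E" and inj: "inj_on f E" and XE: "X \<subseteq> E"
    and fX: "f ` X = insert d V0" and dV0: "d \<notin> V0" and finV0: "finite V0"
    and iV0: "G.independent V0" and sz: "(\<Sum>v\<in>insert d V0. v) = 0"
    and sig0: "\<forall>v\<in>insert d V0. sig J v = 0" and sig1: "\<forall>y\<in>E - X. sig J (f y) = 1"
    and cardR: "card V0 + 1 = R" and supp: "\<forall>x\<in>E. supp_below R (f x)"
    and ne: "E - X \<noteq> {}"
  shows "circuit_hyperplane (vm E f) X"
proof -
  let ?M = "vm E f"
  have finX: "finite X" using fin XE finite_subset by blast
  have vcirc1: "G.dependent (insert d V0)" and vcirc2: "\<And>S. S \<subset> insert d V0 \<Longrightarrow> G.independent S"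
    using sumzero_circuit[of "insert d V0" d] finV0 sz dV0 iV0 by auto
  have circ: "circuit ?M X"
    by (rule circ_of_vec[OF fin inj XE]) (use fX vcirc1 vcirc2 in auto)
  have "d \<in> f ` X" using fX by simp
  then obtain xd where xd: "xd \<in> X" "f xd = d" by (rule imageE) simp
  let ?I0 = "X - {xd}"
  have injX: "inj_on f X" using inj XE inj_on_subset by blast
  have fI0: "f ` ?I0 = V0"
  proof -
    have "f ` ?I0 = f ` X - {f xd}" using inj_on_image_set_diff[OF injX, of X "{xd}"] xd by auto
    then show ?thesis using fX xd dV0 by auto
  qed
  have cardX: "card X = card V0 + 1"
    using card_image[OF injX] fX dV0 finV0 by simp
  have cI0: "card ?I0 = card V0" using cardX xd finX by simp
  have iI0: "indep ?M ?I0" using indep_vm[OF fin inj] fI0 iV0 XE by auto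
  have rX: "rank ?M X = card V0"
  proof (rule rank_eq[OF finX _ iI0 cI0])
    show "?I0 \<subseteq> X" by blast
    fix I assume I: "I \<subseteq> X" "indep ?M I"
    have "I \<noteq> X" using I circ unfolding circuit_def by auto
    then have "I \<subset> X" using I by blast
    then have "card I < card X" using finX psubset_card_mono by blast
    then show "card I \<le> card V0" using cardX by simp
  qed
  have big: "indep ?M (insert y ?I0) \<and> card (insert y ?I0) = R" if y: "y \<in> E - X" for y
  proof -
    have "sig J (f y) = 1" using sig1 y by blast
    then have "f y \<notin> V0" using sig0 by auto
    then have yI0: "y \<notin> ?I0" using fI0 by blast
    have "G.independent (insert (f y) V0)"
      by (rule indep_insert_sig[OF iV0, of J]) (use sig0 sig1 y in auto)
    then have "indep ?M (insert y ?I0)" using indep_vm[OF fin inj] fI0 XE y by auto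
    moreover have "card (insert y ?I0) = R" using yI0 cI0 cardR finX by simp
    ultimately show ?thesis by blast
  qed
  have flat: "flat ?M X"
    unfolding flat_def ground_vm
  proof (intro conjI ballI)
    show "X \<subseteq> E" by (rule XE)
    fix y assume y: "y \<in> E - X"
    have "R \<le> rank ?M (insert y X)"
      using rank_ge[of "insert y X" "insert y ?I0" ?M] big[OF y] finX by auto
    then show "rank ?M X < rank ?M (insert y X)" using rX cardR by simp
  qed
  obtain y0 where y0: "y0 \<in> E - X" using ne by blast
  have rE: "rank ?M E = R"
  proof (rule antisym)
    show "rank ?M E \<le> R"
    proof (rule rank_le[OF fin, of "{}"])
      show "{} \<subseteq> E" by simp
      show "indep ?M {}" using indep_vm[OF fin inj] by (simp add: G.independent_empty)
      fix I assume I: "I \<subseteq> E" "indep ?M I"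
      then have "G.independent (f ` I)" using indep_vm[OF fin inj] by blast
      moreover have "\<forall>v\<in>f ` I. supp_below R v" using supp I by auto
      ultimately have "card (f ` I) \<le> R" using card_bound by blast
      moreover have "inj_on f I" using inj I inj_on_subset by blast
      ultimately show "card I \<le> R" using card_image[of f I] by simp
    qed
    show "R \<le> rank ?M E"
      using rank_ge[of E "insert y0 ?I0" ?M] big[OF y0] fin y0 XE by auto
  qed
  show ?thesis
    unfolding circuit_hyperplane_def hyperplane_def ground_vm
    using circ flat rX rE cardR by simp
qed

lemma vec_add_eq0: "(a::vec) + b = 0 \<Longrightarrow> a = b"
  by (simp add: fun_eq_iff) (metis add_cancel_right_left bit_add_self add.assoc)

lemma supp_below_add: "supp_below R v \<Longrightarrow> supp_below R w \<Longrightarrow> supp_below R (v + w)"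
  by (simp add: supp_below_def)

lemma supp_below_sum: "(\<And>v. v \<in> S \<Longrightarrow> supp_below R (g v)) \<Longrightarrow> supp_below R (\<Sum>v\<in>S. g v)"
  by (simp add: supp_below_def sum_vec_apply)

lemma pair_circuit:
  assumes finQ: "finite Q" and iQ: "G.independent Q" and s0: "\<forall>v\<in>Q. sig J v = 0"
    and sy: "sig J y = 1" and sy': "sig J y' = 1" and yy: "y \<noteq> y'" and sQ: "(\<Sum>v\<in>Q. v) = y + y'"
  shows "G.dependent (insert y (insert y' Q)) \<and> (\<forall>S. S \<subset> insert y (insert y' Q) \<longrightarrow> G.independent S)"
proof -
  let ?T = "insert y (insert y' Q)"
  have yQ: "y \<notin> Q" using s0 sy by auto
  have y'Q: "y' \<notin> Q" using s0 sy' by auto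
  have "(\<Sum>v\<in>?T. v) = y + (y' + (\<Sum>v\<in>Q. v))"
    using yQ y'Q yy finQ by (simp add: sum.insert_if)
  also have "\<dots> = 0" using sQ by (simp add: fun_eq_iff add.assoc[symmetric])
  finally have sT: "(\<Sum>v\<in>?T. v) = 0" .
  have Ty: "?T - {y} = insert y' Q" using yQ yy by auto
  have "G.independent (insert y' Q)" by (rule indep_insert_sig[OF iQ s0 sy'])
  then show ?thesis using sumzero_circuit[of ?T y] sT Ty finQ by auto
qed

lemma conn_vec:
  assumes finV0: "finite V0" and dV0: "d \<notin> V0" and iV0: "G.independent V0"
    and sz: "(\<Sum>v\<in>insert d V0. v) = 0" and s0: "\<forall>v\<in>insert d V0. sig J v = 0"
    and sy: "sig J y = 1" and sy': "sig J y' = 1" and yy: "y \<noteq> y'"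
    and cardR: "card V0 + 1 = R" and supp: "\<forall>v\<in>insert d V0. supp_below R v"
    and suppy: "supp_below R y" "supp_below R y'" and x: "x \<in> insert d V0"
  shows "\<exists>T. x \<in> T \<and> y \<in> T \<and> T \<subseteq> insert y (insert y' (insert d V0)) \<and>
           G.dependent T \<and> (\<forall>S. S \<subset> T \<longrightarrow> G.independent S)"
proof -
  let ?VX = "insert d V0"
  have finVX: "finite ?VX" using finV0 by simp
  have vc2: "\<And>S. S \<subset> ?VX \<Longrightarrow> G.independent S"
    using sumzero_circuit[of ?VX d] finV0 sz dV0 iV0 by auto
  have syy: "sig J (y + y') = 0" using sy sy' by (simp add: sig_add)
  have sp: "y + y' \<in> G.span V0"
  proof (rule ccontr)
    assume ns: "y + y' \<notin> G.span V0"
    have i1: "G.independent (insert (y + y') V0)" by (rule G.independent_insertI[OF ns iV0])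
    have s1: "\<forall>v\<in>insert (y + y') V0. sig J v = 0" using s0 syy by auto
    have i2: "G.independent (insert y (insert (y + y') V0))" by (rule indep_insert_sig[OF i1 s1 sy])
    have n1: "y + y' \<notin> V0" using ns G.span_base by blast
    have n2: "y \<notin> insert (y + y') V0" using s1 sy by auto
    have "card (insert y (insert (y + y') V0)) = R + 1" using n1 n2 finV0 cardR by simp
    moreover have "\<forall>v\<in>insert y (insert (y + y') V0). supp_below R v"
      using supp suppy supp_below_add by auto
    then have "card (insert y (insert (y + y') V0)) \<le> R" using card_bound[OF i2, of R] by blast
    ultimately show False by simp
  qed
  then obtain u where u: "y + y' = (\<Sum>v\<in>V0. gscale (u v) v)"
    using G.span_finite[OF finV0] by blast
  define S where "S = {v\<in>V0. u v = 1}"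
  have "(\<Sum>v\<in>V0. gscale (u v) v) = (\<Sum>v\<in>V0. if u v = 1 then v else 0)"
    by (rule sum.cong) (auto simp: gscale_def fun_eq_iff)
  also have "\<dots> = (\<Sum>v\<in>S. v)" unfolding S_def using sum.inter_filter[OF finV0, of "\<lambda>v. v" "\<lambda>v. u v = 1"] by simp
  finally have sS: "(\<Sum>v\<in>S. v) = y + y'" using u by simp
  have SV0: "S \<subseteq> V0" unfolding S_def by auto
  have finS: "finite S" using SV0 finV0 finite_subset by blast
  obtain Q where Q: "finite Q" "G.independent Q" "Q \<subseteq> ?VX" "(\<Sum>v\<in>Q. v) = y + y'" "x \<in> Q"
  proof (cases "x \<in> S")
    case True
    show ?thesis
      by (rule that[of S]) (use True finS SV0 sS iV0 G.independent_mono in auto)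
  next
    case False
    have SVX: "S \<subseteq> ?VX" using SV0 by auto
    have "(\<Sum>v\<in>?VX. v) = (\<Sum>v\<in>?VX - S. v) + (\<Sum>v\<in>S. v)"
      using sum.subset_diff[OF SVX finVX] by simp
    then have "(\<Sum>v\<in>?VX - S. v) + (\<Sum>v\<in>S. v) = 0" using sz by simp
    then have sD: "(\<Sum>v\<in>?VX - S. v) = y + y'" using vec_add_eq0 sS by metis
    have "S \<noteq> {}"
    proof
      assume "S = {}"
      then have "y + y' = 0" using sS by simp
      then show False using vec_add_eq0 yy by blast
    qed
    then have "?VX - S \<subset> ?VX" using SVX by blast
    then have "G.independent (?VX - S)" by (rule vc2)
    then show ?thesis
      by (intro that[of "?VX - S"]) (use finVX sD x False in auto)
  qed
  have sQ0: "\<forall>v\<in>Q. sig J v = 0" using Q(3) s0 by auto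
  have pc: "G.dependent (insert y (insert y' Q)) \<and> (\<forall>S. S \<subset> insert y (insert y' Q) \<longrightarrow> G.independent S)"
    by (rule pair_circuit[OF Q(1) Q(2) sQ0 sy sy' yy Q(4)])
  show ?thesis
    by (rule exI[of _ "insert y (insert y' Q)"]) (use pc Q(3) Q(5) in auto)
qed

lemma conn_half:
  assumes fin: "finite E" and inj: "inj_on f E" and XE: "X \<subseteq> E" and YE: "Y \<subseteq> E"
    and fX: "f ` X = insert d V0" and dV0: "d \<notin> V0" and finV0: "finite V0"
    and iV0: "G.independent V0" and sz: "(\<Sum>v\<in>insert d V0. v) = 0"
    and sig0: "\<forall>v\<in>insert d V0. sig J v = 0" and sig1: "\<forall>y\<in>Y. sig J (f y) = 1"
    and cardR: "card V0 + 1 = R" and supp: "\<forall>x\<in>E. supp_below R (f x)"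
    and two: "\<exists>b1\<in>Y. \<exists>b2\<in>Y. f b1 \<noteq> f b2"
    and a: "a \<in> X" and b: "b \<in> Y"
  shows "\<exists>C. circuit (vm E f) C \<and> a \<in> C \<and> b \<in> C"
proof -
  obtain b' where b': "b' \<in> Y" "f b' \<noteq> f b" using two by metis
  have suppV: "\<forall>v\<in>insert d V0. supp_below R v" using supp fX XE by force
  have "\<exists>T. f a \<in> T \<and> f b \<in> T \<and> T \<subseteq> insert (f b) (insert (f b') (insert d V0)) \<and>
           G.dependent T \<and> (\<forall>S. S \<subset> T \<longrightarrow> G.independent S)"
  proof (rule conn_vec[OF finV0 dV0 iV0 sz sig0])
    show "sig J (f b) = 1" using sig1 b by blast
    show "sig J (f b') = 1" using sig1 b' by blast
    show "f b \<noteq> f b'" using b' by simp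
    show "card V0 + 1 = R" by (rule cardR)
    show "\<forall>v\<in>insert d V0. supp_below R v" by (rule suppV)
    show "supp_below R (f b)" using supp b YE by blast
    show "supp_below R (f b')" using supp b' YE by blast
    show "f a \<in> insert d V0" using fX a by blast
  qed
  then obtain T where T: "f a \<in> T" "f b \<in> T" "T \<subseteq> insert (f b) (insert (f b') (insert d V0))"
    "G.dependent T" "\<And>S. S \<subset> T \<Longrightarrow> G.independent S" by blast
  let ?C = "{z\<in>E. f z \<in> T}"
  have "insert d V0 \<subseteq> f ` E" using fX XE by (metis image_mono)
  moreover have "f b \<in> f ` E" "f b' \<in> f ` E" using b b' YE by auto
  ultimately have TfE: "T \<subseteq> f ` E" using T(3) by blast
  have fC: "f ` ?C = T" using TfE by auto
  have "circuit (vm E f) ?C"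
    by (rule circ_of_vec[OF fin inj]) (use fC T(4,5) in auto)
  moreover have "a \<in> ?C" "b \<in> ?C" using a b XE YE T(1,2) by auto
  ultimately show ?thesis by blast
qed

lemma classD_gen:
  assumes fin: "finite E" and inj: "inj_on f E" and EXY: "E = X \<union> Y" and dis: "X \<inter> Y = {}"
    and fX: "f ` X = insert dX V0" and dV0: "dX \<notin> V0" and finV0: "finite V0"
    and iV0: "G.independent V0" and szX: "(\<Sum>v\<in>insert dX V0. v) = 0"
    and sX0: "\<forall>v\<in>insert dX V0. sig JX v = 0" and sX1: "\<forall>y\<in>Y. sig JX (f y) = 1"
    and cX: "card V0 + 1 = R" and neV: "V0 \<noteq> {}"
    and fY: "f ` Y = insert dY U0" and dU0: "dY \<notin> U0" and finU0: "finite U0"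
    and iU0: "G.independent U0" and szY: "(\<Sum>v\<in>insert dY U0. v) = 0"
    and sY0: "\<forall>v\<in>insert dY U0. sig JY v = 0" and sY1: "\<forall>x\<in>X. sig JY (f x) = 1"
    and cY: "card U0 + 1 = R" and neU: "U0 \<noteq> {}"
    and supp: "\<forall>x\<in>E. supp_below R (f x)"
  shows "(E, bases (vm E f) \<union> {X, Y}) \<in> class_D"
proof -
  let ?M = "vm E f"
  have XE: "X \<subseteq> E" and YE: "Y \<subseteq> E" using EXY by auto
  have neY: "E - X \<noteq> {}" using fY EXY dis by auto
  have neX: "E - Y \<noteq> {}" using fX EXY dis by auto
  have chX: "circuit_hyperplane ?M X"
    by (rule circuit_hyperplane_gen[OF fin inj XE fX dV0 finV0 iV0 szX sX0 _ cX supp neY])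
       (use sX1 EXY dis in auto)
  have chY: "circuit_hyperplane ?M Y"
    by (rule circuit_hyperplane_gen[OF fin inj YE fY dU0 finU0 iU0 szY sY0 _ cY supp neX])
       (use sY1 EXY dis in auto)
  have twoY: "\<exists>b1\<in>Y. \<exists>b2\<in>Y. f b1 \<noteq> f b2"
  proof -
    obtain u where u: "u \<in> U0" using neU by blast
    have "u \<in> f ` Y" "dY \<in> f ` Y" using fY u by auto
    then obtain b1 b2 where "b1 \<in> Y" "f b1 = u" "b2 \<in> Y" "f b2 = dY" by (metis imageE)
    then show ?thesis using u dU0 by metis
  qed
  have twoX: "\<exists>b1\<in>X. \<exists>b2\<in>X. f b1 \<noteq> f b2"
  proof -
    obtain u where u: "u \<in> V0" using neV by blast
    have "u \<in> f ` X" "dX \<in> f ` X" using fX u by auto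
    then obtain b1 b2 where "b1 \<in> X" "f b1 = u" "b2 \<in> X" "f b2 = dX" by (metis imageE)
    then show ?thesis using u dV0 by metis
  qed
  have cXY: "\<exists>C. circuit ?M C \<and> a \<in> C \<and> b \<in> C" if "a \<in> X" "b \<in> Y" for a b
    by (rule conn_half[OF fin inj XE YE fX dV0 finV0 iV0 szX sX0 sX1 cX supp twoY that])
  have conn: "connected_matroid ?M"
    unfolding connected_matroid_def ground_vm
  proof (intro ballI impI)
    fix a b assume ab: "a \<in> E" "b \<in> E" "a \<noteq> b"
    show "\<exists>C. circuit ?M C \<and> a \<in> C \<and> b \<in> C"
    proof (cases "a \<in> X")
      case aX: True
      show ?thesis
      proof (cases "b \<in> X")
        case True then show ?thesis using aX chX unfolding circuit_hyperplane_def by blast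
      next
        case False then show ?thesis using aX ab EXY cXY by blast
      qed
    next
      case aY: False
      then have aY: "a \<in> Y" using ab EXY by blast
      show ?thesis
      proof (cases "b \<in> Y")
        case True then show ?thesis using aY chY unfolding circuit_hyperplane_def by blast
      next
        case False then have "b \<in> X" using ab EXY by blast
        then show ?thesis using aY cXY by blast
      qed
    qed
  qed
  show ?thesis
    unfolding class_D_def
    apply (rule CollectI)
    apply (rule exI[of _ ?M], rule exI[of _ X], rule exI[of _ Y])
    using matroid_vm[OF fin inj] binary_vm[OF fin inj] conn chX chY dis EXY
    by (simp add: ground_vm)
qed

definition Pset :: "nat \<Rightarrow> vec set" where
  "Pset k = {v :: nat \<Rightarrow> bit. (\<forall>i\<ge>k. v i = 0) \<and> v \<noteq> (\<lambda>_. 0)}"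

lemma card_supp: "card {v::vec. \<forall>i\<ge>k. v i = 0} = 2 ^ k"
proof -
  let ?g = "\<lambda>S. (\<lambda>i. if i \<in> S then 1 else 0) :: vec"
  have "bij_betw ?g (Pow {..<k}) {v::vec. \<forall>i\<ge>k. v i = 0}"
  proof (rule bij_betw_imageI)
    show "inj_on ?g (Pow {..<k})"
    proof (rule inj_onI)
      fix S T assume eq: "?g S = ?g T"
      have "(i \<in> S) = (i \<in> T)" for i
      proof -
        have "?g S i = ?g T i" by (rule fun_cong[OF eq])
        then show ?thesis by (cases "i \<in> S"; cases "i \<in> T") simp_all
      qed
      then show "S = T" by blast
    qed
    show "?g ` Pow {..<k} = {v::vec. \<forall>i\<ge>k. v i = 0}"
    proof
      show "?g ` Pow {..<k} \<subseteq> {v::vec. \<forall>i\<ge>k. v i = 0}" by auto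
      show "{v::vec. \<forall>i\<ge>k. v i = 0} \<subseteq> ?g ` Pow {..<k}"
      proof
        fix v :: vec assume v: "v \<in> {v. \<forall>i\<ge>k. v i = 0}"
        have "v = ?g {i. v i = 1}" by (auto simp: fun_eq_iff)
        moreover have "{i. v i = 1} \<in> Pow {..<k}" using v by (auto simp: not_less[symmetric])
        ultimately show "v \<in> ?g ` Pow {..<k}" by blast
      qed
    qed
  qed
  then have "card {v::vec. \<forall>i\<ge>k. v i = 0} = card (Pow {..<k})"
    by (rule bij_betw_same_card[symmetric])
  then show ?thesis by (simp add: card_Pow)
qed

lemma card_Pset: "card (Pset k) = 2 ^ k - 1"
proof -
  have "Pset k = {v::vec. \<forall>i\<ge>k. v i = 0} - {0}" unfolding Pset_def by (auto simp: zero_fun_def)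
  moreover have "(0::vec) \<in> {v::vec. \<forall>i\<ge>k. v i = 0}" by simp
  moreover have "card {v::vec. \<forall>i\<ge>k. v i = 0} > 0" using card_supp[of k] by simp
  then have "finite {v::vec. \<forall>i\<ge>k. v i = 0}" by (rule card_ge_0_finite)
  ultimately show ?thesis using card_supp[of k] by (simp add: card_Diff_singleton)
qed

lemma finite_Pset: "finite (Pset k)"
proof -
  have "card {v::vec. \<forall>i\<ge>k. v i = 0} > 0" using card_supp[of k] by simp
  then have "finite {v::vec. \<forall>i\<ge>k. v i = 0}" by (rule card_ge_0_finite)
  then show ?thesis unfolding Pset_def by (rule finite_subset[rotated]) auto
qed

lemma isolate:
  assumes "finite S" "u \<in> S" "u i = 1" "\<forall>v\<in>S. v \<noteq> u \<longrightarrow> c v = 0 \<or> v i = 0"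
  shows "(\<Sum>v\<in>S. c v * v i) = (c u :: bit)"
proof -
  have "(\<Sum>v\<in>S. c v * v i) = c u * u i + (\<Sum>v\<in>S - {u}. c v * v i)"
    using sum.remove[OF assms(1,2)] by simp
  moreover have "(\<Sum>v\<in>S - {u}. c v * v i) = 0"
    by (rule sum.neutral) (use assms(4) in auto)
  ultimately show ?thesis using assms(3) by simp
qed

lemma unitv_apply: "unitv j i = (if i = j then 1 else 0)" by (simp add: unitv_def)

lemma unitv_inj: "unitv a = unitv b \<longleftrightarrow> a = b"
proof
  assume "unitv a = unitv b"
  then have "unitv a a = unitv b a" by simp
  then show "a = b" by (simp add: unitv_def split: if_splits)
qed simp

lemma sig_unitv: "finite J \<Longrightarrow> sig J (unitv a) = (if a \<in> J then 1 else 0)"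
  by (simp add: sig_def unitv_def)

lemma max_transfer:
  assumes bij: "bij_betw \<phi> A B" and XA: "X \<subseteq> A"
  shows "X \<in> maximal_sets {I. I \<subseteq> A \<and> Q (\<phi> ` I)} \<longleftrightarrow> \<phi> ` X \<in> maximal_sets {I. I \<subseteq> B \<and> Q I}"
proof -
  have inj: "inj_on \<phi> A" and im: "\<phi> ` A = B" using bij unfolding bij_betw_def by auto
  have pre: "\<phi> ` {x\<in>A. \<phi> x \<in> J} = J" if "J \<subseteq> B" for J using that im by auto
  show ?thesis
  proof
    assume H: "X \<in> maximal_sets {I. I \<subseteq> A \<and> Q (\<phi> ` I)}"
    have XQ: "Q (\<phi> ` X)" and mx: "\<And>J. J \<subseteq> A \<Longrightarrow> Q (\<phi> ` J) \<Longrightarrow> X \<subseteq> J \<Longrightarrow> J = X"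
      using H unfolding maximal_sets_def by auto
    have "\<phi> ` X \<subseteq> B" using XA im by auto
    moreover have "J = \<phi> ` X" if J: "J \<subseteq> B" "Q J" "\<phi> ` X \<subseteq> J" for J
    proof -
      let ?J' = "{x\<in>A. \<phi> x \<in> J}"
      have "?J' \<subseteq> A" by auto
      moreover have "Q (\<phi> ` ?J')" using pre[OF J(1)] J(2) by simp
      moreover have "X \<subseteq> ?J'" using XA J(3) by auto
      ultimately have "?J' = X" by (rule mx)
      then show ?thesis using pre[OF J(1)] by simp
    qed
    ultimately show "\<phi> ` X \<in> maximal_sets {I. I \<subseteq> B \<and> Q I}"
      unfolding maximal_sets_def using XQ by auto
  next
    assume H: "\<phi> ` X \<in> maximal_sets {I. I \<subseteq> B \<and> Q I}"
    have XQ: "Q (\<phi> ` X)" and mx: "\<And>J. J \<subseteq> B \<Longrightarrow> Q J \<Longrightarrow> \<phi> ` X \<subseteq> J \<Longrightarrow> J = \<phi> ` X"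
      using H unfolding maximal_sets_def by auto
    have "J = X" if J: "J \<subseteq> A" "Q (\<phi> ` J)" "X \<subseteq> J" for J
    proof -
      have "\<phi> ` J \<subseteq> B" using J(1) im by auto
      moreover have "\<phi> ` X \<subseteq> \<phi> ` J" using J(3) by (rule image_mono)
      ultimately have "\<phi> ` J = \<phi> ` X" using mx J(2) by blast
      then show "J = X" using inj_on_image_eq_iff[OF inj J(1) XA] by simp
    qed
    then show "X \<in> maximal_sets {I. I \<subseteq> A \<and> Q (\<phi> ` I)}"
      unfolding maximal_sets_def using XQ XA by auto
  qed
qed

lemma PG_eq: "PG k = (Pset k, maximal_sets {I. I \<subseteq> Pset k \<and> gf2_lin_indep id I})"
  unfolding PG_def Pset_def Let_def by simp

locale constr =
  fixes k :: nat and idx :: "vec \<Rightarrow> nat"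
  assumes oddk: "odd k" and bij: "bij_betw idx (Pset k) {..<card (Pset k)}"
begin

abbreviation "m \<equiv> card (Pset k)"
abbreviation "r \<equiv> k + 2 + m"
definition "pc p = k + 2 + idx p"
definition "Pv p = p + unitv k + unitv (k+1) + unitv (pc p)"
definition "sv i = unitv i + unitv k"
definition "tv i = unitv i + unitv (k+1)"
definition "VP = Pv ` Pset k"
definition "VX0 = insert (unitv k) (VP \<union> sv ` {..<k})"
definition "VY0 = unitv ` {k+1..<r} \<union> tv ` {..<k}"
definition "dX = (\<Sum>v\<in>VX0. v)"
definition "dY = (\<Sum>v\<in>VY0. v)"
definition "JX = {k+1..<r}"
definition "JY = {k}"
definition "VC = unitv ` {k..<r}"

lemma P_low: "p \<in> Pset k \<Longrightarrow> i \<ge> k \<Longrightarrow> p i = 0"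
  unfolding Pset_def by auto

lemma idx_lt: "p \<in> Pset k \<Longrightarrow> idx p < m"
  using bij unfolding bij_betw_def by auto

lemma idx_inj: "p \<in> Pset k \<Longrightarrow> q \<in> Pset k \<Longrightarrow> idx p = idx q \<Longrightarrow> p = q"
  using bij unfolding bij_betw_def inj_on_def by blast

lemma pc_bounds: "p \<in> Pset k \<Longrightarrow> k + 2 \<le> pc p \<and> pc p < r"
  using idx_lt by (simp add: pc_def)

lemma Pv_apply: "p \<in> Pset k \<Longrightarrow> Pv p i =
    (if i < k then p i else if i = k \<or> i = k + 1 \<or> i = pc p then 1 else 0)"
  using pc_bounds[of p] P_low[of p i]
  by (auto simp: Pv_def unitv_def)

lemma sv_apply: "i < k \<Longrightarrow> sv i j = (if j = i \<or> j = k then 1 else 0)"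
  by (auto simp: sv_def unitv_def)

lemma tv_apply: "i < k \<Longrightarrow> tv i j = (if j = i \<or> j = k + 1 then 1 else 0)"
  by (auto simp: tv_def unitv_def)

lemma finite_VP: "finite VP" unfolding VP_def using finite_Pset by simp
lemma finite_VX0: "finite VX0" unfolding VX0_def using finite_VP by simp
lemma finite_VY0: "finite VY0" unfolding VY0_def by simp

lemma Pv_in_VX0: "p \<in> Pset k \<Longrightarrow> Pv p \<in> VX0" unfolding VX0_def VP_def by blast
lemma sv_in_VX0: "i < k \<Longrightarrow> sv i \<in> VX0" unfolding VX0_def by blast
lemma uk_in_VX0: "unitv k \<in> VX0" unfolding VX0_def by blast

lemma VX0_cases:
  assumes "v \<in> VX0"
  obtains "v = unitv k" | p where "p \<in> Pset k" "v = Pv p" | i where "i < k" "v = sv i"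
  using assms unfolding VX0_def VP_def by blast

lemma VY0_cases:
  assumes "v \<in> VY0"
  obtains j where "k + 1 \<le> j" "j < r" "v = unitv j" | i where "i < k" "v = tv i"
  using assms unfolding VY0_def by force

lemma indep_VX0: "G.independent VX0"
proof -
  have "gf2_lin_indep id VX0"
    unfolding gf2_lin_indep_def
  proof (intro allI impI)
    fix c :: "vec \<Rightarrow> bit" assume H0: "\<forall>i. (\<Sum>x\<in>VX0. c x * id x i) = 0"
    have H: "(\<Sum>x\<in>VX0. c x * x i) = 0" for i using H0 by simp
    have s1: "c (Pv p) = 0" if p: "p \<in> Pset k" for p
    proof -
      have "(\<Sum>v\<in>VX0. c v * v (pc p)) = c (Pv p)"
      proof (rule isolate[OF finite_VX0 Pv_in_VX0[OF p]])
        show "Pv p (pc p) = 1" using Pv_apply[OF p] pc_bounds[OF p] by simp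
        show "\<forall>v\<in>VX0. v \<noteq> Pv p \<longrightarrow> c v = 0 \<or> v (pc p) = 0"
        proof (intro ballI impI)
          fix v assume v: "v \<in> VX0" "v \<noteq> Pv p"
          show "c v = 0 \<or> v (pc p) = 0"
          proof (cases rule: VX0_cases[OF v(1)])
            case 1 then show ?thesis using pc_bounds[OF p] by (simp add: unitv_def)
          next
            case (2 q)
            have "pc q \<noteq> pc p" using idx_inj[OF 2(1) p] v(2) 2(2) by (auto simp: pc_def)
            then show ?thesis using 2 Pv_apply[OF 2(1)] pc_bounds[OF p] by simp
          next
            case (3 i) then show ?thesis using sv_apply[of i] pc_bounds[OF p] by simp
          qed
        qed
      qed
      then show ?thesis using H by simp
    qed
    have s2: "c (sv i) = 0" if i: "i < k" for i
    proof -
      have "(\<Sum>v\<in>VX0. c v * v i) = c (sv i)"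
      proof (rule isolate[OF finite_VX0 sv_in_VX0[OF i]])
        show "sv i i = 1" using sv_apply[OF i] by simp
        show "\<forall>v\<in>VX0. v \<noteq> sv i \<longrightarrow> c v = 0 \<or> v i = 0"
        proof (intro ballI impI)
          fix v assume v: "v \<in> VX0" "v \<noteq> sv i"
          show "c v = 0 \<or> v i = 0"
          proof (cases rule: VX0_cases[OF v(1)])
            case 1 then show ?thesis using i by (simp add: unitv_def)
          next
            case (2 q) then show ?thesis using s1 by simp
          next
            case (3 j) then show ?thesis using sv_apply[of j] v(2) i by auto
          qed
        qed
      qed
      then show ?thesis using H by simp
    qed
    have s3: "c (unitv k) = 0"
    proof -
      have "(\<Sum>v\<in>VX0. c v * v k) = c (unitv k)"
      proof (rule isolate[OF finite_VX0 uk_in_VX0])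
        show "unitv k k = 1" by (simp add: unitv_def)
        show "\<forall>v\<in>VX0. v \<noteq> unitv k \<longrightarrow> c v = 0 \<or> v k = 0"
        proof (intro ballI impI)
          fix v assume v: "v \<in> VX0" "v \<noteq> unitv k"
          show "c v = 0 \<or> v k = 0"
            by (cases rule: VX0_cases[OF v(1)]) (use v s1 s2 in auto)
        qed
      qed
      then show ?thesis using H by simp
    qed
    show "\<forall>x\<in>VX0. c x = 0"
    proof
      fix x assume "x \<in> VX0"
      then show "c x = 0" by (cases rule: VX0_cases) (use s1 s2 s3 in auto)
    qed
  qed
  then show ?thesis using lin_indep_iff[OF finite_VX0] by simp
qed

lemma tv_in_VY0: "i < k \<Longrightarrow> tv i \<in> VY0" unfolding VY0_def by blast
lemma u_in_VY0: "k + 1 \<le> j \<Longrightarrow> j < r \<Longrightarrow> unitv j \<in> VY0" unfolding VY0_def by force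

lemma indep_VY0: "G.independent VY0"
proof -
  have "gf2_lin_indep id VY0"
    unfolding gf2_lin_indep_def
  proof (intro allI impI)
    fix c :: "vec \<Rightarrow> bit" assume H0: "\<forall>i. (\<Sum>x\<in>VY0. c x * id x i) = 0"
    have H: "(\<Sum>x\<in>VY0. c x * x i) = 0" for i using H0 by simp
    have s1: "c (tv i) = 0" if i: "i < k" for i
    proof -
      have "(\<Sum>v\<in>VY0. c v * v i) = c (tv i)"
      proof (rule isolate[OF finite_VY0 tv_in_VY0[OF i]])
        show "tv i i = 1" using tv_apply[OF i] by simp
        show "\<forall>v\<in>VY0. v \<noteq> tv i \<longrightarrow> c v = 0 \<or> v i = 0"
        proof (intro ballI impI)
          fix v assume v: "v \<in> VY0" "v \<noteq> tv i"
          show "c v = 0 \<or> v i = 0"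
          proof (cases rule: VY0_cases[OF v(1)])
            case (1 j) then show ?thesis using i by (simp add: unitv_def)
          next
            case (2 j) then show ?thesis using tv_apply[of j] v(2) i by auto
          qed
        qed
      qed
      then show ?thesis using H by simp
    qed
    have s2: "c (unitv j) = 0" if j: "k + 1 \<le> j" "j < r" for j
    proof -
      have "(\<Sum>v\<in>VY0. c v * v j) = c (unitv j)"
      proof (rule isolate[OF finite_VY0 u_in_VY0[OF j]])
        show "unitv j j = 1" by (simp add: unitv_def)
        show "\<forall>v\<in>VY0. v \<noteq> unitv j \<longrightarrow> c v = 0 \<or> v j = 0"
        proof (intro ballI impI)
          fix v assume v: "v \<in> VY0" "v \<noteq> unitv j"
          show "c v = 0 \<or> v j = 0"
          proof (cases rule: VY0_cases[OF v(1)])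
            case (1 j') then show ?thesis using v(2) by (auto simp: unitv_def)
          next
            case (2 i) then show ?thesis using s1 by simp
          qed
        qed
      qed
      then show ?thesis using H by simp
    qed
    show "\<forall>x\<in>VY0. c x = 0"
    proof
      fix x assume "x \<in> VY0"
      then show "c x = 0" by (cases rule: VY0_cases) (use s1 s2 in auto)
    qed
  qed
  then show ?thesis using lin_indep_iff[OF finite_VY0] by simp
qed

lemma Pv_inj: "inj_on Pv (Pset k)"
proof (rule inj_onI)
  fix p q assume p: "p \<in> Pset k" and q: "q \<in> Pset k" and eq: "Pv p = Pv q"
  show "p = q"
  proof
    fix i
    show "p i = q i"
    proof (cases "i < k")
      case True
      have "Pv p i = Pv q i" using eq by simp
      then show ?thesis using True Pv_apply[OF p] Pv_apply[OF q] by simp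
    next
      case False then show ?thesis using P_low[OF p] P_low[OF q] by simp
    qed
  qed
qed

lemma card_VX0: "card VX0 = m + k + 1"
proof -
  have d1: "VP \<inter> sv ` {..<k} = {}"
  proof -
    have "Pv p \<noteq> sv i" if "p \<in> Pset k" "i < k" for p i
    proof
      assume "Pv p = sv i"
      then have "Pv p (k+1) = sv i (k+1)" by simp
      then show False using Pv_apply[OF that(1)] sv_apply[OF that(2)] that(2) by simp
    qed
    then show ?thesis unfolding VP_def by blast
  qed
  have d2: "unitv k \<notin> VP \<union> sv ` {..<k}"
  proof
    assume "unitv k \<in> VP \<union> sv ` {..<k}"
    then show False
    proof
      assume "unitv k \<in> VP"
      then obtain p where p: "p \<in> Pset k" "unitv k = Pv p" unfolding VP_def by blast
      then have "unitv k (k+1) = Pv p (k+1)" by simp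
      then show False using Pv_apply[OF p(1)] by (simp add: unitv_def)
    next
      assume "unitv k \<in> sv ` {..<k}"
      then obtain i where i: "i < k" "unitv k = sv i" by blast
      then have "unitv k i = sv i i" by simp
      then show False using sv_apply[OF i(1)] i(1) by (simp add: unitv_def)
    qed
  qed
  have svinj: "inj_on sv {..<k}"
  proof (rule inj_onI)
    fix i j assume "i \<in> {..<k}" "j \<in> {..<k}" "sv i = sv j"
    then have "sv i i = sv j i" by simp
    then show "i = j" using sv_apply \<open>i \<in> {..<k}\<close> \<open>j \<in> {..<k}\<close> by (simp split: if_splits)
  qed
  have cVP: "card VP = m" unfolding VP_def using card_image[OF Pv_inj] .
  have csv: "card (sv ` {..<k}) = k" using card_image[OF svinj] by simp
  have "card VX0 = Suc (card (VP \<union> sv ` {..<k}))"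
    unfolding VX0_def using d2 finite_VP by simp
  also have "card (VP \<union> sv ` {..<k}) = m + k"
    using card_Un_disjoint[OF finite_VP _ d1] cVP csv by simp
  finally show ?thesis by simp
qed

lemma card_VY0: "card VY0 = m + k + 1"
proof -
  have d1: "unitv ` {k+1..<r} \<inter> tv ` {..<k} = {}"
  proof -
    have "unitv j \<noteq> tv i" if "k + 1 \<le> j" "i < k" for i j
    proof
      assume "unitv j = tv i"
      then have "unitv j i = tv i i" by simp
      then show False using tv_apply[OF that(2)] that by (simp add: unitv_def)
    qed
    then show ?thesis by force
  qed
  have tvinj: "inj_on tv {..<k}"
  proof (rule inj_onI)
    fix i j assume "i \<in> {..<k}" "j \<in> {..<k}" "tv i = tv j"
    then have "tv i i = tv j i" by simp
    then show "i = j" using tv_apply \<open>i \<in> {..<k}\<close> \<open>j \<in> {..<k}\<close> by (simp split: if_splits)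
  qed
  have uinj: "inj_on unitv {k+1..<r}" by (rule inj_onI) (simp add: unitv_inj)
  have "card VY0 = card (unitv ` {k+1..<r}) + card (tv ` {..<k})"
    unfolding VY0_def by (rule card_Un_disjoint) (use d1 in auto)
  also have "\<dots> = (m + 1) + k" using card_image[OF uinj] card_image[OF tvinj] by simp
  finally show ?thesis by simp
qed

lemma finJX: "finite JX" and finJY: "finite JY" unfolding JX_def JY_def by auto

lemma sig_P: "p \<in> Pset k \<Longrightarrow> \<forall>j\<in>J. k \<le> j \<Longrightarrow> sig J p = 0"
  unfolding sig_def using P_low by (simp add: sum.neutral)

lemma sigJX_unitv: "sig JX (unitv a) = (if k + 1 \<le> a \<and> a < r then 1 else 0)"
  using sig_unitv[OF finJX] by (simp add: JX_def)

lemma sigJY_unitv: "sig JY (unitv a) = (if a = k then 1 else 0)"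
  using sig_unitv[OF finJY] by (simp add: JY_def)

lemma sig_VX0:
  assumes "v \<in> VX0" shows "sig JX v = 0 \<and> sig JY v = 1"
  using assms
proof (cases rule: VX0_cases)
  case 1 then show ?thesis by (simp add: sigJX_unitv sigJY_unitv)
next
  case (2 p)
  have a: "sig JX p = 0" "sig JY p = 0" using sig_P[OF 2(1)] by (auto simp: JX_def JY_def)
  show ?thesis using 2 a pc_bounds[OF 2(1)]
    by (simp add: Pv_def sig_add sigJX_unitv sigJY_unitv)
next
  case (3 i) then show ?thesis by (simp add: sv_def sig_add sigJX_unitv sigJY_unitv)
qed

lemma sig_VY0:
  assumes "v \<in> VY0" shows "sig JX v = 1 \<and> sig JY v = 0"
  using assms
proof (cases rule: VY0_cases)
  case (1 j) then show ?thesis by (simp add: sigJX_unitv sigJY_unitv)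
next
  case (2 i) then show ?thesis by (simp add: tv_def sig_add sigJX_unitv sigJY_unitv)
qed

lemma parity: "(of_nat (m + k + 1) :: bit) = 1"
proof -
  have "m = 2 ^ k - 1" by (rule card_Pset)
  moreover have "k > 0" using oddk by (cases k) auto
  ultimately have e: "m + k + 1 = 2 ^ k + k" by simp
  have "even ((2::nat) ^ k)" using \<open>k > 0\<close> by simp
  then have "odd ((2::nat) ^ k + k)" using oddk by simp
  then have "odd (m + k + 1)" unfolding e .
  then show ?thesis by (simp only: bit_of_nat) simp
qed

lemma sig_dX: "sig JX dX = 0 \<and> sig JY dX = 1"
proof -
  have "sig JX dX = (\<Sum>v\<in>VX0. sig JX v)" unfolding dX_def sig_sum by simp
  also have "\<dots> = 0" using sig_VX0 by (simp add: sum.neutral)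
  finally have a: "sig JX dX = 0" .
  have "sig JY dX = (\<Sum>v\<in>VX0. sig JY v)" unfolding dX_def sig_sum by simp
  also have "\<dots> = (\<Sum>v\<in>VX0. 1)" using sig_VX0 by (simp cong: sum.cong)
  also have "\<dots> = of_nat (card VX0)" by simp
  finally show ?thesis using a card_VX0 parity by simp
qed

lemma sig_dY: "sig JX dY = 1 \<and> sig JY dY = 0"
proof -
  have "sig JY dY = (\<Sum>v\<in>VY0. sig JY v)" unfolding dY_def sig_sum by simp
  also have "\<dots> = 0" using sig_VY0 by (simp add: sum.neutral)
  finally have a: "sig JY dY = 0" .
  have "sig JX dY = (\<Sum>v\<in>VY0. sig JX v)" unfolding dY_def sig_sum by simp
  also have "\<dots> = (\<Sum>v\<in>VY0. 1)" using sig_VY0 by (simp cong: sum.cong)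
  also have "\<dots> = of_nat (card VY0)" by simp
  finally show ?thesis using a card_VY0 parity by simp
qed

lemma kpos: "k > 0" using oddk by (cases k) auto

lemma dX_notin: "dX \<notin> VX0"
proof
  assume d: "dX \<in> VX0"
  have "(\<Sum>v\<in>VX0. v) = dX + (\<Sum>v\<in>VX0 - {dX}. v)" using sum.remove[OF finite_VX0 d] by simp
  then have "dX + (\<Sum>v\<in>VX0 - {dX}. v) = dX" using dX_def by simp
  then have z: "(\<Sum>v\<in>VX0 - {dX}. v) = 0" by simp
  have "card (VX0 - {dX}) \<ge> 1" using card_VX0 d kpos by simp
  then have "VX0 - {dX} \<noteq> {}"
  proof (intro notI)
    assume "VX0 - {dX} = {}"
    from \<open>card (VX0 - {dX}) \<ge> 1\<close> show False unfolding \<open>VX0 - {dX} = {}\<close> by simp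
  qed
  then have "(\<Sum>v\<in>VX0 - {dX}. v) \<noteq> 0"
    using indep_sum_nonzero[OF indep_VX0 Diff_subset] finite_VX0 by simp
  then show False using z by simp
qed

lemma dY_notin: "dY \<notin> VY0"
proof
  assume d: "dY \<in> VY0"
  have "(\<Sum>v\<in>VY0. v) = dY + (\<Sum>v\<in>VY0 - {dY}. v)" using sum.remove[OF finite_VY0 d] by simp
  then have "dY + (\<Sum>v\<in>VY0 - {dY}. v) = dY" using dY_def by simp
  then have z: "(\<Sum>v\<in>VY0 - {dY}. v) = 0" by simp
  have "card (VY0 - {dY}) \<ge> 1" using card_VY0 d kpos by simp
  then have "VY0 - {dY} \<noteq> {}"
  proof (intro notI)
    assume "VY0 - {dY} = {}"
    from \<open>card (VY0 - {dY}) \<ge> 1\<close> show False unfolding \<open>VY0 - {dY} = {}\<close> by simp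
  qed
  then have "(\<Sum>v\<in>VY0 - {dY}. v) \<noteq> 0"
    using indep_sum_nonzero[OF indep_VY0 Diff_subset] finite_VY0 by simp
  then show False using z by simp
qed

lemma sum_X: "(\<Sum>v\<in>insert dX VX0. v) = 0"
  using dX_notin finite_VX0 by (simp add: dX_def[symmetric])

lemma sum_Y: "(\<Sum>v\<in>insert dY VY0. v) = 0"
  using dY_notin finite_VY0 by (simp add: dY_def[symmetric])

lemma supp_unitv: "j < R \<Longrightarrow> supp_below R (unitv j)"
  by (simp add: supp_below_def unitv_def)

lemma supp_VX0:
  assumes "v \<in> VX0" shows "supp_below r v"
  using assms
proof (cases rule: VX0_cases)
  case 1 then show ?thesis by (simp add: supp_below_def unitv_def)
next
  case (2 p) then show ?thesis using pc_bounds[OF 2(1)] by (simp add: supp_below_def Pv_apply)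
next
  case (3 i) then show ?thesis by (simp add: supp_below_def sv_apply)
qed

lemma supp_VY0: "v \<in> VY0 \<Longrightarrow> supp_below r v"
  by (erule VY0_cases) (auto simp: supp_below_def unitv_def tv_def)

lemma supp_X: "v \<in> insert dX VX0 \<Longrightarrow> supp_below r v"
  using supp_VX0 supp_below_sum[of VX0 r "\<lambda>v. v"] by (auto simp: dX_def)

lemma supp_Y: "v \<in> insert dY VY0 \<Longrightarrow> supp_below r v"
  using supp_VY0 supp_below_sum[of VY0 r "\<lambda>v. v"] by (auto simp: dY_def)

lemma sigX_all: "v \<in> insert dX VX0 \<Longrightarrow> sig JX v = 0 \<and> sig JY v = 1"
  using sig_VX0 sig_dX by auto

lemma sigY_all: "v \<in> insert dY VY0 \<Longrightarrow> sig JX v = 1 \<and> sig JY v = 0"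
  using sig_VY0 sig_dY by auto

lemma XY_disj: "insert dX VX0 \<inter> insert dY VY0 = {}"
  using sigX_all sigY_all by fastforce

definition "proj v = (\<lambda>i. if i < k then v i else (0::bit))"

lemma proj_Pv: "p \<in> Pset k \<Longrightarrow> proj (Pv p) = p"
  using P_low[of p] by (auto simp: proj_def fun_eq_iff Pv_apply)

lemma proj_inj: "inj_on proj VP"
  unfolding VP_def by (rule inj_onI) (auto simp: proj_Pv)

lemma finite_VC: "finite VC" unfolding VC_def by simp

lemma VP_VC_disj: "VP \<inter> VC = {}"
proof -
  have "Pv p \<noteq> unitv j" if "p \<in> Pset k" for p j
  proof
    assume eq: "Pv p = unitv j"
    have "Pv p k = unitv j k" "Pv p (k+1) = unitv j (k+1)" using eq by simp_all
    then show False using Pv_apply[OF that] by (simp add: unitv_def split: if_splits)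
  qed
  then show ?thesis unfolding VP_def VC_def by blast
qed

lemma VC_sum: "(\<Sum>v\<in>VC. c v * v i) = (if k \<le> i \<and> i < r then c (unitv i) else (0::bit))"
proof (cases "k \<le> i \<and> i < r")
  case True
  have "(\<Sum>v\<in>VC. c v * v i) = c (unitv i)"
    by (rule isolate[OF finite_VC]) (use True in \<open>auto simp: VC_def unitv_def\<close>)
  then show ?thesis using True by simp
next
  case False
  then show ?thesis by (auto simp: VC_def unitv_def intro!: sum.neutral)
qed

lemma indep_VC: "G.independent VC"
proof -
  have "gf2_lin_indep id VC"
    unfolding gf2_lin_indep_def
  proof (intro allI impI ballI)
    fix c :: "vec \<Rightarrow> bit" and u assume H: "\<forall>i. (\<Sum>x\<in>VC. c x * id x i) = 0" and u: "u \<in> VC"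
    then obtain j where j: "k \<le> j" "j < r" "u = unitv j" unfolding VC_def by auto
    have "(\<Sum>x\<in>VC. c x * x j) = 0" using H by simp
    then show "c u = 0" using VC_sum[of c j] j by simp
  qed
  then show ?thesis using lin_indep_iff[OF finite_VC] by simp
qed

lemma V4:
  assumes SVP: "S \<subseteq> VP"
  shows "G.independent (S \<union> VC) \<longleftrightarrow> gf2_lin_indep id (proj ` S)"
proof -
  have finS: "finite S" using SVP finite_VP finite_subset by blast
  have finSC: "finite (S \<union> VC)" using finS finite_VC by simp
  have disj: "S \<inter> VC = {}" using SVP VP_VC_disj by blast
  have pinj: "inj_on proj S" using proj_inj SVP inj_on_subset by blast
  have low: "v i = proj v i" if "v \<in> S" "i < k" for v i using that by (simp add: proj_def)
  have projhigh: "proj v i = 0" if "\<not> i < k" for v i using that by (simp add: proj_def)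
  have high: "v i = 0" if "v \<in> S" "r \<le> i" for v i
  proof -
    have "v \<in> VX0" using that SVP unfolding VX0_def by blast
    then show ?thesis using supp_VX0 that unfolding supp_below_def by blast
  qed
  have split: "(\<Sum>x\<in>S \<union> VC. g x) = (\<Sum>x\<in>S. g x) + (\<Sum>x\<in>VC. g x)" for g :: "vec \<Rightarrow> bit"
    by (rule sum.union_disjoint[OF finS finite_VC disj])
  show ?thesis
  proof
    assume I: "G.independent (S \<union> VC)"
    then have I': "gf2_lin_indep id (S \<union> VC)" using lin_indep_iff[OF finSC] by simp
    show "gf2_lin_indep id (proj ` S)"
      unfolding gf2_lin_indep_def
    proof (intro allI impI ballI)
      fix c :: "vec \<Rightarrow> bit" and w assume H: "\<forall>i. (\<Sum>x\<in>proj ` S. c x * id x i) = 0" and w: "w \<in> proj ` S"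
      have H': "(\<Sum>v\<in>S. c (proj v) * proj v i) = 0" for i
        using H sum.reindex[OF pinj, of "\<lambda>x. c x * x i"] by simp
      define A where "A i = (\<Sum>v\<in>S. c (proj v) * v i)" for i
      define c' where "c' v = (if v \<in> S then c (proj v) else A (SOME j. v = unitv j))" for v
      have c'u: "c' (unitv j) = A j" if "k \<le> j" "j < r" for j
      proof -
        have "unitv j \<notin> S" using disj that unfolding VC_def by auto
        moreover have "(SOME j'. unitv j = unitv j') = j"
          by (rule some_equality) (auto simp: unitv_inj)
        ultimately show ?thesis by (simp add: c'_def)
      qed
      have "\<forall>i. (\<Sum>x\<in>S \<union> VC. c' x * id x i) = 0"
      proof
        fix i
        have e1: "(\<Sum>x\<in>S. c' x * x i) = A i" unfolding A_def c'_def by (rule sum.cong) auto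
        have e2: "(\<Sum>x\<in>VC. c' x * x i) = (if k \<le> i \<and> i < r then A i else 0)"
          using VC_sum[of c' i] c'u by simp
        have "(\<Sum>x\<in>S \<union> VC. c' x * id x i) = A i + (if k \<le> i \<and> i < r then A i else 0)"
          using split[of "\<lambda>x. c' x * x i"] e1 e2 by simp
        also have "\<dots> = 0"
        proof (cases "i < k")
          case True
          have "A i = (\<Sum>v\<in>S. c (proj v) * proj v i)" unfolding A_def
            by (rule sum.cong) (auto simp: low[OF _ True])
          then show ?thesis using True H' by simp
        next
          case False
          show ?thesis
          proof (cases "i < r")
            case True then show ?thesis using False by simp
          next
            case False
            then have "A i = 0" unfolding A_def by (auto intro!: sum.neutral simp: high)
            then show ?thesis by simp
          qed
        qed
        finally show "(\<Sum>x\<in>S \<union> VC. c' x * id x i) = 0" .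
      qed
      then have z: "\<forall>x\<in>S \<union> VC. c' x = 0" using I' unfolding gf2_lin_indep_def by blast
      obtain v where v: "v \<in> S" "w = proj v" using w by blast
      have "v \<in> S \<union> VC" using v(1) by (rule UnI1)
      then have "c' v = 0" using z by (rule bspec[rotated])
      then show "c w = 0" using v by (simp add: c'_def)
    qed
  next
    assume G: "gf2_lin_indep id (proj ` S)"
    have "gf2_lin_indep id (S \<union> VC)"
      unfolding gf2_lin_indep_def
    proof (intro allI impI)
      fix c :: "vec \<Rightarrow> bit" assume H: "\<forall>i. (\<Sum>x\<in>S \<union> VC. c x * id x i) = 0"
      have H2: "(\<Sum>x\<in>S. c x * x i) + (\<Sum>x\<in>VC. c x * x i) = 0" for i
        using H split[of "\<lambda>x. c x * x i"] by simp
      define c' where "c' w = c (inv_into S proj w)" for w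
      have "\<forall>i. (\<Sum>w\<in>proj ` S. c' w * id w i) = 0"
      proof
        fix i
        have "(\<Sum>w\<in>proj ` S. c' w * id w i) = (\<Sum>v\<in>S. c v * proj v i)"
          using sum.reindex[OF pinj, of "\<lambda>w. c' w * w i"] pinj by (simp add: c'_def)
        also have "\<dots> = 0"
        proof (cases "i < k")
          case True
          have "(\<Sum>x\<in>VC. c x * x i) = 0" using VC_sum[of c i] True by simp
          then have "(\<Sum>x\<in>S. c x * x i) = 0" using H2[of i] by simp
          moreover have "(\<Sum>v\<in>S. c v * proj v i) = (\<Sum>x\<in>S. c x * x i)"
            by (rule sum.cong) (auto simp: low[OF _ True])
          ultimately show ?thesis by simp
        next
          case False then show ?thesis by (simp add: projhigh)
        qed
        finally show "(\<Sum>w\<in>proj ` S. c' w * id w i) = 0" .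
      qed
      then have z: "\<forall>w\<in>proj ` S. c' w = 0" using G unfolding gf2_lin_indep_def by blast
      have cS: "c v = 0" if "v \<in> S" for v
        using z that pinj by (auto simp: c'_def)
      show "\<forall>x\<in>S \<union> VC. c x = 0"
      proof
        fix x assume x: "x \<in> S \<union> VC"
        show "c x = 0"
        proof (cases "x \<in> S")
          case True then show ?thesis by (rule cS)
        next
          case False
          then obtain j where j: "k \<le> j" "j < r" "x = unitv j" using x unfolding VC_def by auto
          have "(\<Sum>x\<in>S. c x * x j) = 0" using cS by simp
          then have "(\<Sum>x\<in>VC. c x * x j) = 0" using H2[of j] by simp
          then show ?thesis using VC_sum[of c j] j by simp
        qed
      qed
    qed
    then show "G.independent (S \<union> VC)" using lin_indep_iff[OF finSC] by simp
  qed
qed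

definition "WW = insert dX VX0 \<union> insert dY VY0"

lemma finite_WW: "finite WW" unfolding WW_def using finite_VX0 finite_VY0 by simp

lemma main_lab:
  fixes lab :: "vec \<Rightarrow> nat"
  assumes inj: "inj_on lab WW"
  shows "\<exists>M :: nat matroid. M \<in> class_D \<and> (\<exists>N :: nat matroid. is_minor N M \<and> iso N (PG k))"
proof -
  define E where "E = lab ` WW"
  define f where "f = inv_into WW lab"
  define X where "X = lab ` insert dX VX0"
  define Y where "Y = lab ` insert dY VY0"
  have fl: "f (lab v) = v" if "v \<in> WW" for v unfolding f_def using inj that by simp
  have fimg: "f ` lab ` S = S" if "S \<subseteq> WW" for S
  proof -
    have "f ` lab ` S = (\<lambda>v. f (lab v)) ` S" by (simp add: image_image)
    also have "\<dots> = S" using fl that by (simp add: subset_iff)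
    finally show ?thesis .
  qed
  have finE: "finite E" unfolding E_def using finite_WW by simp
  have injf: "inj_on f E" unfolding E_def f_def by (rule inj_on_inv_into) simp
  have XW: "insert dX VX0 \<subseteq> WW" and YW: "insert dY VY0 \<subseteq> WW" unfolding WW_def by auto
  have EXY: "E = X \<union> Y" unfolding E_def X_def Y_def WW_def by (simp add: image_Un)
  have dis: "X \<inter> Y = {}"
  proof -
    have "X \<inter> Y = lab ` (insert dX VX0 \<inter> insert dY VY0)"
      unfolding X_def Y_def by (rule inj_on_image_Int[OF inj XW YW, symmetric])
    then show ?thesis using XY_disj by simp
  qed
  have fX: "f ` X = insert dX VX0" unfolding X_def by (rule fimg[OF XW])
  have fY: "f ` Y = insert dY VY0" unfolding Y_def by (rule fimg[OF YW])
  have fE: "f ` E = WW" unfolding E_def by (rule fimg) simp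
  have sX1: "\<forall>y\<in>Y. sig JX (f y) = 1" using fY sigY_all by (metis imageI)
  have sY1: "\<forall>x\<in>X. sig JY (f x) = 1" using fX sigX_all by (metis imageI)
  have supp: "\<forall>x\<in>E. supp_below r (f x)"
  proof
    fix x assume "x \<in> E"
    then have "f x \<in> WW" using fE by blast
    then show "supp_below r (f x)" unfolding WW_def using supp_X supp_Y by blast
  qed
  have cX: "card VX0 + 1 = r" using card_VX0 by simp
  have cY: "card VY0 + 1 = r" using card_VY0 by simp
  have neX: "VX0 \<noteq> {}" using uk_in_VX0 by blast
  have neY: "VY0 \<noteq> {}" using u_in_VY0[of "k+1"] by auto
  have sX0: "\<forall>v\<in>insert dX VX0. sig JX v = 0" using sigX_all by blast
  have sY0: "\<forall>v\<in>insert dY VY0. sig JY v = 0" using sigY_all by blast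
  let ?M = "vm E f"
  let ?M' = "(E, bases ?M \<union> {X, Y})"
  have D: "?M' \<in> class_D"
    by (rule classD_gen[OF finE injf EXY dis fX dX_notin finite_VX0 indep_VX0 sum_X sX0 sX1 cX neX
          fY dY_notin finite_VY0 indep_VY0 sum_Y sY0 sY1 cY neY supp])
  define C where "C = lab ` VC"
  define Pts where "Pts = lab ` VP"
  define Dl where "Dl = E - C - Pts"
  have VCW: "VC \<subseteq> WW"
  proof
    fix v assume "v \<in> VC"
    then obtain j where j: "k \<le> j" "j < r" "v = unitv j" unfolding VC_def by auto
    show "v \<in> WW"
    proof (cases "j = k")
      case True then show ?thesis using j uk_in_VX0 unfolding WW_def by simp
    next
      case False then show ?thesis using j u_in_VY0[of j] unfolding WW_def by simp
    qed
  qed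
  have VPW: "VP \<subseteq> WW" unfolding WW_def VX0_def by blast
  have CE: "C \<subseteq> E" unfolding C_def E_def using VCW by (rule image_mono)
  have PE: "Pts \<subseteq> E" unfolding Pts_def E_def using VPW by (rule image_mono)
  have PC: "Pts \<inter> C = {}"
  proof -
    have "Pts \<inter> C = lab ` (VP \<inter> VC)"
      unfolding Pts_def C_def by (rule inj_on_image_Int[OF inj VPW VCW, symmetric])
    then show ?thesis using VP_VC_disj by simp
  qed
  have ground': "ground ?M' = E" by (simp add: ground_def)
  have G': "ground ?M' - C - Dl = Pts" unfolding ground' Dl_def using PE PC CE by blast
  have indep': "indep ?M' I \<longleftrightarrow> indep ?M I \<or> I \<subseteq> X \<or> I \<subseteq> Y" for I
    unfolding indep_def by (auto simp: bases_def)
  have fC: "f ` C = VC" unfolding C_def by (rule fimg[OF VCW])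
  have iC: "indep ?M C" using indep_vm[OF finE injf, of C] CE fC indep_VC by simp
  have Jmax: "C \<in> maximal_sets {I. I \<subseteq> C \<and> indep ?M' I}"
    unfolding maximal_sets_def using iC indep' by auto
  have k1: "k + 1 < r" using kpos by simp
  have ukC: "lab (unitv k) \<in> C" unfolding C_def VC_def by simp
  have uk1C: "lab (unitv (k+1)) \<in> C" unfolding C_def VC_def using k1 by simp
  have ukY: "lab (unitv k) \<notin> Y"
  proof
    assume "lab (unitv k) \<in> Y"
    then obtain v where v: "v \<in> insert dY VY0" "lab (unitv k) = lab v" unfolding Y_def by blast
    have "unitv k \<in> WW" unfolding WW_def using uk_in_VX0 by simp
    then have "unitv k = v" using inj v YW unfolding inj_on_def by blast
    then show False using sigY_all[OF v(1)] sigX_all[OF insertI2[OF uk_in_VX0]] by simp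
  qed
  have uk1X: "lab (unitv (k+1)) \<notin> X"
  proof
    assume "lab (unitv (k+1)) \<in> X"
    then obtain v where v: "v \<in> insert dX VX0" "lab (unitv (k+1)) = lab v" unfolding X_def by blast
    have uin: "unitv (k+1) \<in> VY0" using u_in_VY0[of "k+1"] k1 by simp
    have "unitv (k+1) \<in> WW" unfolding WW_def using uin by simp
    then have "unitv (k+1) = v" using inj v XW unfolding inj_on_def by blast
    then show False using sigX_all[OF v(1)] sigY_all[OF insertI2[OF uin]] by simp
  qed
  define \<phi> where "\<phi> = proj \<circ> f"
  have key: "indep ?M' (I \<union> C) \<longleftrightarrow> gf2_lin_indep id (\<phi> ` I)" if IP: "I \<subseteq> Pts" for I
  proof -
    have "\<not> (I \<union> C \<subseteq> X)" using uk1C uk1X by blast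
    moreover have "\<not> (I \<union> C \<subseteq> Y)" using ukC ukY by blast
    ultimately have "indep ?M' (I \<union> C) \<longleftrightarrow> indep ?M (I \<union> C)" using indep' by blast
    also have "\<dots> \<longleftrightarrow> G.independent (f ` I \<union> VC)"
      using indep_vm[OF finE injf, of "I \<union> C"] IP PE CE fC by (auto simp: image_Un)
    also have "\<dots> \<longleftrightarrow> gf2_lin_indep id (proj ` f ` I)"
    proof (rule V4)
      have "f ` I \<subseteq> f ` Pts" using IP by (rule image_mono)
      then show "f ` I \<subseteq> VP" using fimg[OF VPW] unfolding Pts_def by simp
    qed
    finally show ?thesis unfolding \<phi>_def by (simp add: image_comp)
  qed
  have bij\<phi>: "bij_betw \<phi> Pts (Pset k)"
  proof -
    have e: "\<phi> (lab (Pv p)) = p" if "p \<in> Pset k" for p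
    proof -
      have "Pv p \<in> WW" using VPW that unfolding VP_def by blast
      then show ?thesis using fl proj_Pv[OF that] unfolding \<phi>_def by simp
    qed
    show ?thesis
    proof (rule bij_betw_imageI)
      show "inj_on \<phi> Pts"
      proof (rule inj_onI)
        fix x y assume "x \<in> Pts" "y \<in> Pts" "\<phi> x = \<phi> y"
        then obtain p q where "p \<in> Pset k" "q \<in> Pset k" "x = lab (Pv p)" "y = lab (Pv q)" "\<phi> x = \<phi> y"
          unfolding Pts_def VP_def by blast
        then show "x = y" using e by simp
      qed
      have "\<phi> ` Pts = (\<lambda>p. \<phi> (lab (Pv p))) ` Pset k" unfolding Pts_def VP_def by (simp add: image_image)
      also have "\<dots> = Pset k" using e by simp
      finally show "\<phi> ` Pts = Pset k" .
    qed
  qed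
  define N where "N = (ground ?M' - C - Dl, maximal_sets {I. I \<subseteq> ground ?M' - C - Dl \<and> indep ?M' (I \<union> C)})"
  have minor: "is_minor N ?M'"
    unfolding is_minor_def
  proof (intro exI conjI)
    show "C \<subseteq> ground ?M'" using CE ground' by simp
    show "Dl \<subseteq> ground ?M'" unfolding Dl_def ground' by blast
    show "C \<inter> Dl = {}" unfolding Dl_def by blast
    show "C \<in> maximal_sets {I. I \<subseteq> C \<and> indep ?M' I}" by (rule Jmax)
    show "N = (ground ?M' - C - Dl, maximal_sets {I. I \<subseteq> ground ?M' - C - Dl \<and> indep ?M' (I \<union> C)})"
      by (rule N_def)
  qed
  have gN: "ground N = Pts" unfolding N_def using G' by (simp add: ground_def)
  have bN: "bases N = maximal_sets {I. I \<subseteq> Pts \<and> gf2_lin_indep id (\<phi> ` I)}"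
  proof -
    have eqs: "{I. I \<subseteq> Pts \<and> indep ?M' (I \<union> C)} = {I. I \<subseteq> Pts \<and> gf2_lin_indep id (\<phi> ` I)}"
      using key by blast
    have "bases N = maximal_sets {I. I \<subseteq> ground ?M' - C - Dl \<and> indep ?M' (I \<union> C)}"
      unfolding N_def bases_def by (rule snd_conv)
    then show ?thesis unfolding G' eqs .
  qed
  have iso: "iso N (PG k)"
    unfolding iso_def
  proof (intro exI conjI allI impI)
    show "bij_betw \<phi> (ground N) (ground (PG k))" using bij\<phi> gN PG_eq by (simp add: ground_def)
    fix Z assume Z: "Z \<subseteq> ground N"
    show "Z \<in> bases N \<longleftrightarrow> \<phi> ` Z \<in> bases (PG k)"
    proof -
      have bP: "bases (PG k) = maximal_sets {I. I \<subseteq> Pset k \<and> gf2_lin_indep id I}"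
        by (simp add: PG_eq bases_def)
      have "Z \<subseteq> Pts" using Z gN by simp
      then show ?thesis
        unfolding bN bP by (rule max_transfer[OF bij\<phi>])
    qed
  qed
  show ?thesis
    by (rule exI[of _ ?M'], intro conjI D exI[of _ N]) (use minor iso in auto)
qed

end

theorem mainTheorem16:
  fixes k :: nat
  assumes "odd k" and "0 < k"
  shows "\<exists>M :: nat matroid. M \<in> class_D \<and>
           (\<exists>N :: nat matroid. is_minor N M \<and> iso N (PG k))"
proof -
  obtain idx where idx: "bij_betw idx (Pset k) {0..<card (Pset k)}"
    using ex_bij_betw_finite_nat[OF finite_Pset] by blast
  interpret constr k idx
    by unfold_locales (use assms idx in \<open>simp_all add: atLeast0LessThan\<close>)
  obtain lab :: "vec \<Rightarrow> nat" and n where "lab ` WW = {i. i < n}" "inj_on lab WW"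
    using finite_imp_inj_to_nat_seg[OF finite_WW] by blast
  then show ?thesis using main_lab by blast
qed

end
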